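(* Let $V$ be a vertex operator algebra of CFT type and $M=\bigoplus_{n\ge0}M(n)$ an admissible $V$-module which is strongly generated by a homogeneous subspace $W\subseteq M$. Then $M/C_2(M)$ is generated, as a module over the commutative algebra $V/C_2(V)$, by $\{w+C_2(M):w\in W\}$.
   Context: $V_0=\mathbb{C}\mathbf{1}$, $V_+=\bigoplus_{n\ge1}V_n$; $Y_M(a,z)=\sum_na_nz^{-n-1}$. $C_2(V)=\mathrm{span}\{a_{-2}b:a,b\in V\}$, $C_2(M)=\mathrm{span}\{a_{-2}v:a\in V,v\in M\}$; $V/C_2(V)$ is a commutative algebra with product $(a+C_2(V))(b+C_2(V))=a_{-1}b+C_2(V)$, and $M/C_2(M)$ is a $V/C_2(V)$-module via $(a+C_2(V)).(v+C_2(M))=a_{-1}v+C_2(M)$. $M$ is strongly generated by $W$ if $M$ is spanned by $a^1_{-n_1}\cdots a^k_{-n_k}w$ with $k\ge0$, $a^i\in V_+$ homogeneous, $n_i\ge1$, $w\in W$. *)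

theory Defs
  imports Complex_Main
begin

(* Vector spaces over the complex numbers are modelled with the library locale
   vector_space (scale :: complex => 'a => 'a); the whole type 'a is the space. *)

definition graded_direct_sum :: "(complex \<Rightarrow> 'a::ab_group_add \<Rightarrow> 'a) \<Rightarrow> ('i \<Rightarrow> 'a set) \<Rightarrow> bool" where
  "graded_direct_sum s G \<longleftrightarrow>
     (\<forall>n. module.subspace s (G n)) \<and>
     (\<forall>v. \<exists>F f. finite F \<and> (\<forall>n\<in>F. f n \<in> G n) \<and> v = (\<Sum>n\<in>F. f n)) \<and>
     (\<forall>F f. finite F \<and> (\<forall>n\<in>F. f n \<in> G n) \<and> (\<Sum>n\<in>F. f n) = 0 \<longrightarrow> (\<forall>n\<in>F. f n = 0))"

text \<open>Y a n v is the mode a_n v, i.e. Y(a,z) v = sum_n a_n v z^(-n-1).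
  Bilinearity of the vertex operator map.\<close>
definition vertex_bilinear ::
  "(complex \<Rightarrow> 'v::ab_group_add \<Rightarrow> 'v) \<Rightarrow> (complex \<Rightarrow> 'm::ab_group_add \<Rightarrow> 'm) \<Rightarrow> ('v \<Rightarrow> int \<Rightarrow> 'm \<Rightarrow> 'm) \<Rightarrow> bool" where
  "vertex_bilinear sV sM Y \<longleftrightarrow>
     (\<forall>a b n v. Y (a + b) n v = Y a n v + Y b n v) \<and>
     (\<forall>c a n v. Y (sV c a) n v = sM c (Y a n v)) \<and>
     (\<forall>a n v w. Y a n (v + w) = Y a n v + Y a n w) \<and>
     (\<forall>a n c v. Y a n (sM c v) = sM c (Y a n v))"

definition vertex_truncation :: "('v \<Rightarrow> int \<Rightarrow> 'm \<Rightarrow> 'm::zero) \<Rightarrow> bool" where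
  "vertex_truncation Y \<longleftrightarrow> (\<forall>a v. \<exists>N. \<forall>n\<ge>N. Y a n v = 0)"

text \<open>Both sums are finite by truncation: all terms with i >= N vanish as soon as
  a_{k+i} b = 0, b_{n+i} c = 0 and a_{m+i} c = 0 for i >= N, so the identity is
  stated with sums over i < N for any such N.  Y is the vertex operator of V,
  YM the one of the module (YM = Y for V itself).\<close>
definition jacobi_identity ::
  "('v \<Rightarrow> int \<Rightarrow> 'v \<Rightarrow> 'v::zero) \<Rightarrow> (complex \<Rightarrow> 'm::ab_group_add \<Rightarrow> 'm) \<Rightarrow> ('v \<Rightarrow> int \<Rightarrow> 'm \<Rightarrow> 'm) \<Rightarrow> bool" where
  "jacobi_identity Y sM YM \<longleftrightarrow>
     (\<forall>a b c m n k N.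
        (\<forall>i\<ge>N. Y a (k + int i) b = 0) \<and> (\<forall>i\<ge>N. YM b (n + int i) c = 0) \<and>
        (\<forall>i\<ge>N. YM a (m + int i) c = 0) \<longrightarrow>
        (\<Sum>i<N. sM (of_int m gchoose i) (YM (Y a (k + int i) b) (m + n - int i) c)) =
        (\<Sum>i<N. sM ((-1) ^ i * (of_int k gchoose i))
            (YM a (m + k - int i) (YM b (n + int i) c)
             - sM (if even k then 1 else -1) (YM b (n + k - int i) (YM a (m + int i) c)))))"

text \<open>Vertex operator algebra (V, Y, 1, omega) of central charge cc, with grading Vg.
  L(n) = omega_{n+1}.\<close>
definition is_VOA ::
  "(complex \<Rightarrow> 'v::ab_group_add \<Rightarrow> 'v) \<Rightarrow> (int \<Rightarrow> 'v set) \<Rightarrow> ('v \<Rightarrow> int \<Rightarrow> 'v \<Rightarrow> 'v)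
   \<Rightarrow> 'v \<Rightarrow> 'v \<Rightarrow> complex \<Rightarrow> bool" where
  "is_VOA sV Vg Y vac om cc \<longleftrightarrow>
     vector_space sV \<and>
     graded_direct_sum sV Vg \<and>
     (\<forall>n. \<exists>B. finite B \<and> Vg n \<subseteq> module.span sV B) \<and>
     (\<exists>N. \<forall>n<N. Vg n = {0}) \<and>
     vertex_bilinear sV sV Y \<and>
     vertex_truncation Y \<and>
     (\<forall>n v. Y vac n v = (if n = -1 then v else 0)) \<and>
     (\<forall>a. Y a (-1) vac = a) \<and> (\<forall>a n. n \<ge> 0 \<longrightarrow> Y a n vac = 0) \<and>
     jacobi_identity Y sV Y \<and>
     om \<in> Vg 2 \<and>
     (\<forall>m n v. Y om (m + 1) (Y om (n + 1) v) - Y om (n + 1) (Y om (m + 1) v) =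
        sV (of_int (m - n)) (Y om (m + n + 1) v) +
        (if m + n = 0 then sV ((of_int m ^ 3 - of_int m) / 12 * cc) v else 0)) \<and>
     (\<forall>n. \<forall>v\<in>Vg n. Y om 1 v = sV (of_int n) v) \<and>
     (\<forall>a n v. Y (Y om 0 a) n v = sV (- of_int n) (Y a (n - 1) v))"

definition is_CFT_type_VOA ::
  "(complex \<Rightarrow> 'v::ab_group_add \<Rightarrow> 'v) \<Rightarrow> (int \<Rightarrow> 'v set) \<Rightarrow> ('v \<Rightarrow> int \<Rightarrow> 'v \<Rightarrow> 'v)
   \<Rightarrow> 'v \<Rightarrow> 'v \<Rightarrow> complex \<Rightarrow> bool" where
  "is_CFT_type_VOA sV Vg Y vac om cc \<longleftrightarrow>
     is_VOA sV Vg Y vac om cc \<and> (\<forall>n<0. Vg n = {0}) \<and> Vg 0 = module.span sV {vac}"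

definition is_admissible_module ::
  "(complex \<Rightarrow> 'v::ab_group_add \<Rightarrow> 'v) \<Rightarrow> (int \<Rightarrow> 'v set) \<Rightarrow> ('v \<Rightarrow> int \<Rightarrow> 'v \<Rightarrow> 'v) \<Rightarrow> 'v
   \<Rightarrow> (complex \<Rightarrow> 'm::ab_group_add \<Rightarrow> 'm) \<Rightarrow> (nat \<Rightarrow> 'm set) \<Rightarrow> ('v \<Rightarrow> int \<Rightarrow> 'm \<Rightarrow> 'm) \<Rightarrow> bool" where
  "is_admissible_module sV Vg Y vac sM Mg YM \<longleftrightarrow>
     vector_space sM \<and>
     graded_direct_sum sM Mg \<and>
     vertex_bilinear sV sM YM \<and>
     vertex_truncation YM \<and>
     (\<forall>n v. YM vac n v = (if n = -1 then v else 0)) \<and>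
     jacobi_identity Y sM YM \<and>
     (\<forall>a k m n v. a \<in> Vg k \<longrightarrow> v \<in> Mg n \<longrightarrow>
        YM a m v \<in> (if k - m - 1 + int n \<ge> 0 then Mg (nat (k - m - 1 + int n)) else {0}))"

definition homogeneous_subspace :: "(complex \<Rightarrow> 'm::ab_group_add \<Rightarrow> 'm) \<Rightarrow> (nat \<Rightarrow> 'm set) \<Rightarrow> 'm set \<Rightarrow> bool" where
  "homogeneous_subspace sM Mg W \<longleftrightarrow>
     module.subspace sM W \<and>
     (\<forall>w\<in>W. \<exists>F f. finite F \<and> (\<forall>n\<in>F. f n \<in> W \<inter> Mg n) \<and> w = (\<Sum>n\<in>F. f n))"

inductive_set strong_monomials ::
  "(int \<Rightarrow> 'v set) \<Rightarrow> ('v \<Rightarrow> int \<Rightarrow> 'm \<Rightarrow> 'm) \<Rightarrow> 'm set \<Rightarrow> 'm set"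
  for Vg YM W where
  base: "w \<in> W \<Longrightarrow> w \<in> strong_monomials Vg YM W"
| step: "a \<in> Vg d \<Longrightarrow> d \<ge> 1 \<Longrightarrow> n \<ge> 1 \<Longrightarrow> v \<in> strong_monomials Vg YM W
          \<Longrightarrow> YM a (- n) v \<in> strong_monomials Vg YM W"

definition strongly_generated ::
  "(complex \<Rightarrow> 'm::ab_group_add \<Rightarrow> 'm) \<Rightarrow> (int \<Rightarrow> 'v set) \<Rightarrow> ('v \<Rightarrow> int \<Rightarrow> 'm \<Rightarrow> 'm) \<Rightarrow> 'm set \<Rightarrow> bool" where
  "strongly_generated sM Vg YM W \<longleftrightarrow> module.span sM (strong_monomials Vg YM W) = UNIV"

definition C2_space :: "(complex \<Rightarrow> 'm::ab_group_add \<Rightarrow> 'm) \<Rightarrow> ('v \<Rightarrow> int \<Rightarrow> 'm \<Rightarrow> 'm) \<Rightarrow> 'm set" where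
  "C2_space sM YM = module.span sM {YM a (-2) v | a v. True}"

text \<open>M/C_2(M) is generated, as a module over V/C_2(V) with action
  (a + C_2(V)).(v + C_2(M)) = a_{-1} v + C_2(M), by the classes w + C_2(M), w \<in> W:
  i.e. every class v + C_2(M) is a finite linear combination of classes
  (a + C_2(V)).(w + C_2(M)) = a_{-1} w + C_2(M) with a \<in> V, w \<in> W.\<close>
definition C2_quotient_generated_by ::
  "(complex \<Rightarrow> 'm::ab_group_add \<Rightarrow> 'm) \<Rightarrow> ('v \<Rightarrow> int \<Rightarrow> 'm \<Rightarrow> 'm) \<Rightarrow> 'm set \<Rightarrow> bool" where
  "C2_quotient_generated_by sM YM W \<longleftrightarrow>
     (\<forall>v. \<exists>u \<in> module.span sM {YM a (-1) w | a w. w \<in> W}. v - u \<in> C2_space sM YM)"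

end

theory Submission
  imports Defs
begin

lemma (in module) span_map:
  assumes add: "\<And>x y. f (x + y) = f x + f y"
    and sc: "\<And>c x. f (scale c x) = scale c (f x)"
    and T: "subspace T" and B: "\<And>b. b \<in> B \<Longrightarrow> f b \<in> T"
    and x: "x \<in> span B"
  shows "f x \<in> T"
proof -
  have f0: "f 0 = 0" using add[of 0 0] by simp
  have "subspace {x. f x \<in> T}"
    unfolding subspace_def using T f0 add sc
    by (auto simp: subspace_0 subspace_add subspace_scale)
  moreover have "B \<subseteq> {x. f x \<in> T}" using B by auto
  ultimately have "span B \<subseteq> {x. f x \<in> T}" by (rule span_minimal[rotated])
  thus ?thesis using x by auto
qed

lemma sum_split0: "0 < (N::nat) \<Longrightarrow> (\<Sum>i<N. f i) = f 0 + (\<Sum>i\<in>{1..<N}. f i)"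
proof -
  assume "0 < N"
  hence "{..<N} = insert 0 {1..<N}" by auto
  thus ?thesis by simp
qed

lemma trunc_nat:
  assumes "vertex_truncation Y"
  shows "\<exists>N::nat. \<forall>i\<ge>N. Y a (k + int i) b = 0"
proof -
  obtain N0 where "\<forall>n\<ge>N0. Y a n b = 0" using assms unfolding vertex_truncation_def by blast
  thus ?thesis by (intro exI[of _ "nat (N0 - k)"]) auto
qed

context
  fixes sV :: "complex \<Rightarrow> 'v::ab_group_add \<Rightarrow> 'v"
    and Vg :: "int \<Rightarrow> 'v set"
    and Y :: "'v \<Rightarrow> int \<Rightarrow> 'v \<Rightarrow> 'v"
    and vac om :: 'v and cc :: complex
    and sM :: "complex \<Rightarrow> 'm::ab_group_add \<Rightarrow> 'm"
    and Mg :: "nat \<Rightarrow> 'm set"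
    and YM :: "'v \<Rightarrow> int \<Rightarrow> 'm \<Rightarrow> 'm"
  assumes V: "is_VOA sV Vg Y vac om cc"
    and M: "is_admissible_module sV Vg Y vac sM Mg YM"
begin

lemma Mvs: "vector_space sM" using M unfolding is_admissible_module_def by simp

lemma YM_add: "YM a n (x + y) = YM a n x + YM a n y"
  using M unfolding is_admissible_module_def vertex_bilinear_def by blast
lemma YM_scale: "YM a n (sM c x) = sM c (YM a n x)"
  using M unfolding is_admissible_module_def vertex_bilinear_def by blast
lemma YM_0: "YM a n 0 = 0"
  using YM_add[of a n 0 0] by simp
lemma YM_0l: "YM 0 n x = 0"
proof -
  have "vertex_bilinear sV sM YM" using M unfolding is_admissible_module_def by blast
  hence "\<forall>a b n v. YM (a + b) n v = YM a n v + YM b n v"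
    unfolding vertex_bilinear_def by (elim conjE)
  hence "YM (0 + 0) n x = YM 0 n x + YM 0 n x" by blast
  thus ?thesis by simp
qed
lemma YM_vac: "YM vac n v = (if n = -1 then v else 0)"
  using M unfolding is_admissible_module_def by blast
lemma Y_vac1: "Y a (-1) vac = a" using V unfolding is_VOA_def by blast
lemma Y_vac2: "n \<ge> 0 \<Longrightarrow> Y a n vac = 0" using V unfolding is_VOA_def by blast
lemma truncY: "vertex_truncation Y" using V unfolding is_VOA_def by blast
lemma truncYM: "vertex_truncation YM" using M unfolding is_admissible_module_def by blast
lemma jac: "jacobi_identity Y sM YM" using M unfolding is_admissible_module_def by blast

lemma jac_inst:
  assumes "\<forall>i\<ge>N. Y a (k + int i) b = 0" "\<forall>i\<ge>N. YM b (n + int i) c = 0"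
        "\<forall>i\<ge>N. YM a (m + int i) c = 0"
  shows "(\<Sum>i<N. sM (of_int m gchoose i) (YM (Y a (k + int i) b) (m + n - int i) c)) =
        (\<Sum>i<N. sM ((-1) ^ i * (of_int k gchoose i))
            (YM a (m + k - int i) (YM b (n + int i) c)
             - sM (if even k then 1 else -1) (YM b (n + k - int i) (YM a (m + int i) c))))"
  using jac assms unfolding jacobi_identity_def by blast

lemma deriv_m:
  "YM (Y a (-2) vac) (m - 1) c = sM (1 - of_int m) (YM a (m - 2) c)"
proof -
  interpret M: vector_space sM by (rule Mvs)
  obtain N0 where N0: "\<forall>i\<ge>N0. YM a (m + int i) c = 0" using trunc_nat[OF truncYM] by blast
  define N where "N = max 2 N0"
  have J: "(\<Sum>i<N. sM (of_int m gchoose i) (YM (Y a (-2 + int i) vac) (m + -1 - int i) c)) =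
        (\<Sum>i<N. sM ((-1) ^ i * (of_int (-2) gchoose i))
            (YM a (m + -2 - int i) (YM vac (-1 + int i) c)
             - sM (if even (-2::int) then 1 else -1) (YM vac (-1 + -2 - int i) (YM a (m + int i) c))))"
    apply (rule jac_inst)
    using N0 Y_vac2 YM_vac unfolding N_def by auto
  have L: "(\<Sum>i<N. sM (of_int m gchoose i) (YM (Y a (-2 + int i) vac) (m + -1 - int i) c))
     = (\<Sum>i<2. sM (of_int m gchoose i) (YM (Y a (-2 + int i) vac) (m + -1 - int i) c))"
    apply (rule sum.mono_neutral_right)
    using Y_vac2 YM_0l unfolding N_def by auto
  have L2: "(\<Sum>i<2. sM (of_int m gchoose i) (YM (Y a (-2 + int i) vac) (m + -1 - int i) c))
     = YM (Y a (-2) vac) (m - 1) c + sM (of_int m) (YM a (m - 2) c)"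
    by (simp add: numeral_2_eq_2 Y_vac1 algebra_simps)
  have R: "(\<Sum>i<N. sM ((-1) ^ i * (of_int (-2) gchoose i))
            (YM a (m + -2 - int i) (YM vac (-1 + int i) c)
             - sM (if even (-2::int) then 1 else -1) (YM vac (-1 + -2 - int i) (YM a (m + int i) c))))
     = YM a (m - 2) c"
    apply (subst sum_split0)
    using YM_vac YM_0 unfolding N_def by auto
  have "YM (Y a (-2) vac) (m - 1) c + sM (of_int m) (YM a (m - 2) c) = YM a (m - 2) c"
    using J L L2 R by simp
  hence "YM (Y a (-2) vac) (m - 1) c = YM a (m - 2) c - sM (of_int m) (YM a (m - 2) c)"
    by (simp add: algebra_simps)
  also have "\<dots> = sM (1 - of_int m) (YM a (m - 2) c)"
    by (simp add: M.scale_left_diff_distrib)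
  finally show ?thesis .
qed

lemma C2_sub: "module.subspace sM (C2_space sM YM)"
proof -
  interpret M: vector_space sM by (rule Mvs)
  show ?thesis unfolding C2_space_def by simp
qed

lemma C2_nat: "YM a (-(int j + 2)) c \<in> C2_space sM YM"
proof (induction j arbitrary: a c)
  case 0
  interpret M: vector_space sM by (rule Mvs)
  show ?case unfolding C2_space_def by (rule M.span_base) auto
next
  case (Suc j)
  interpret M: vector_space sM by (rule Mvs)
  have d: "YM (Y a (-2) vac) (- (int j + 1) - 1) c = sM (1 - of_int (- (int j + 1))) (YM a (- (int j + 1) - 2) c)"
    by (rule deriv_m)
  have e1: "- (int j + 1) - 1 = -(int j + 2)" by simp
  have e2: "- (int j + 1) - 2 = -(int (Suc j) + 2)" by simp
  have e3: "(1 - of_int (- (int j + 1)) :: complex) = of_nat j + 2" by simp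
  have d2: "YM (Y a (-2) vac) (-(int j + 2)) c = sM (of_nat j + 2) (YM a (-(int (Suc j) + 2)) c)"
    using d unfolding e1 e2 e3 .
  have nz: "(of_nat j + 2 :: complex) \<noteq> 0"
    by (metis add_is_0 of_nat_add of_nat_eq_0_iff of_nat_numeral zero_neq_numeral)
  have "YM a (-(int (Suc j) + 2)) c = sM (inverse (of_nat j + 2)) (YM (Y a (-2) vac) (-(int j + 2)) c)"
    unfolding d2 using nz by simp
  also have "\<dots> \<in> C2_space sM YM"
    by (rule M.subspace_scale[OF C2_sub Suc.IH])
  finally show ?case .
qed

lemma C2_low: "m \<le> -2 \<Longrightarrow> YM a m c \<in> C2_space sM YM"
proof -
  assume "m \<le> -2"
  then have "m = -(int (nat (-m - 2)) + 2)" by simp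
  then show ?thesis using C2_nat[of a "nat (-m - 2)" c] by metis
qed

lemma comm_C2: "YM a (-1) (YM b (-2) v) \<in> C2_space sM YM"
proof -
  interpret M: vector_space sM by (rule Mvs)
  obtain N1 where N1: "\<forall>i\<ge>N1. Y a (0 + int i) b = 0" using trunc_nat[OF truncY] by blast
  obtain N2 where N2: "\<forall>i\<ge>N2. YM b (-2 + int i) v = 0" using trunc_nat[OF truncYM] by blast
  obtain N3 where N3: "\<forall>i\<ge>N3. YM a (-1 + int i) v = 0" using trunc_nat[OF truncYM] by blast
  define N where "N = Suc (max N1 (max N2 N3))"
  have J: "(\<Sum>i<N. sM (of_int (-1) gchoose i) (YM (Y a (0 + int i) b) (-1 + -2 - int i) v)) =
        (\<Sum>i<N. sM ((-1) ^ i * (of_int 0 gchoose i))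
            (YM a (-1 + 0 - int i) (YM b (-2 + int i) v)
             - sM (if even (0::int) then 1 else -1) (YM b (-2 + 0 - int i) (YM a (-1 + int i) v))))"
    apply (rule jac_inst)
    using N1 N2 N3 unfolding N_def by auto
  have L: "(\<Sum>i<N. sM (of_int (-1) gchoose i) (YM (Y a (0 + int i) b) (-1 + -2 - int i) v)) \<in> C2_space sM YM"
    by (rule M.subspace_sum[OF C2_sub], rule M.subspace_scale[OF C2_sub], rule C2_low) simp
  have R: "(\<Sum>i<N. sM ((-1) ^ i * (of_int 0 gchoose i))
            (YM a (-1 + 0 - int i) (YM b (-2 + int i) v)
             - sM (if even (0::int) then 1 else -1) (YM b (-2 + 0 - int i) (YM a (-1 + int i) v))))
       = YM a (-1) (YM b (-2) v) - YM b (-2) (YM a (-1) v)"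
    apply (subst sum_split0)
    unfolding N_def by (auto simp: gbinomial_0_left)
  have "YM a (-1) (YM b (-2) v) = (\<Sum>i<N. sM (of_int (-1) gchoose i) (YM (Y a (0 + int i) b) (-1 + -2 - int i) v)) + YM b (-2) (YM a (-1) v)"
    using J R by (simp add: algebra_simps)
  also have "\<dots> \<in> C2_space sM YM"
    apply (rule M.subspace_add[OF C2_sub L])
    unfolding C2_space_def by (rule M.span_base) auto
  finally show ?thesis .
qed

lemma assoc_C2: "YM a (-1) (YM b (-1) w) - YM (Y a (-1) b) (-1) w \<in> C2_space sM YM"
proof -
  interpret M: vector_space sM by (rule Mvs)
  obtain N1 where N1: "\<forall>i\<ge>N1. Y a (-1 + int i) b = 0" using trunc_nat[OF truncY] by blast
  obtain N2 where N2: "\<forall>i\<ge>N2. YM b (-1 + int i) w = 0" using trunc_nat[OF truncYM] by blast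
  obtain N3 where N3: "\<forall>i\<ge>N3. YM a (0 + int i) w = 0" using trunc_nat[OF truncYM] by blast
  define N where "N = Suc (max N1 (max N2 N3))"
  have J: "(\<Sum>i<N. sM (of_int 0 gchoose i) (YM (Y a (-1 + int i) b) (0 + -1 - int i) w)) =
        (\<Sum>i<N. sM ((-1) ^ i * (of_int (-1) gchoose i))
            (YM a (0 + -1 - int i) (YM b (-1 + int i) w)
             - sM (if even (-1::int) then 1 else -1) (YM b (-1 + -1 - int i) (YM a (0 + int i) w))))"
    apply (rule jac_inst)
    using N1 N2 N3 unfolding N_def by auto
  have L: "(\<Sum>i<N. sM (of_int 0 gchoose i) (YM (Y a (-1 + int i) b) (0 + -1 - int i) w))
     = YM (Y a (-1) b) (-1) w"
    apply (subst sum_split0)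
    unfolding N_def by (auto simp: gbinomial_0_left)
  define R where "R = (\<Sum>i\<in>{1..<N}. sM ((-1) ^ i * (of_int (-1) gchoose i))
            (YM a (0 + -1 - int i) (YM b (-1 + int i) w)
             - sM (if even (-1::int) then 1 else -1) (YM b (-1 + -1 - int i) (YM a (0 + int i) w))))"
  have RC: "R \<in> C2_space sM YM"
    unfolding R_def
    apply (rule M.subspace_sum[OF C2_sub], rule M.subspace_scale[OF C2_sub])
    apply (rule M.subspace_diff[OF C2_sub])
     apply (rule C2_low) apply simp
    apply (rule M.subspace_scale[OF C2_sub])
    apply (rule C2_low) apply simp
    done
  have Z: "YM b (-2) (YM a 0 w) \<in> C2_space sM YM"
    unfolding C2_space_def by (rule M.span_base) auto
  have "YM (Y a (-1) b) (-1) w = (YM a (-1) (YM b (-1) w) + YM b (-2) (YM a 0 w)) + R"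
  proof -
    have N0: "0 < N" unfolding N_def by simp
    have "YM (Y a (-1) b) (-1) w = (\<Sum>i<N. sM ((-1) ^ i * (of_int (-1) gchoose i))
            (YM a (0 + -1 - int i) (YM b (-1 + int i) w)
             - sM (if even (-1::int) then 1 else -1) (YM b (-1 + -1 - int i) (YM a (0 + int i) w))))"
      using J L by simp
    also have "\<dots> = (YM a (-1) (YM b (-1) w) + YM b (-2) (YM a 0 w)) + R"
      unfolding sum_split0[OF N0] R_def by simp
    finally show ?thesis .
  qed
  hence "YM a (-1) (YM b (-1) w) - YM (Y a (-1) b) (-1) w = - (YM b (-2) (YM a 0 w) + R)"
    by (simp add: algebra_simps)
  also have "\<dots> \<in> C2_space sM YM"
    by (intro M.subspace_neg[OF C2_sub] M.subspace_add[OF C2_sub] Z RC)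
  finally show ?thesis .
qed

lemma main_gen:
  assumes SG: "strongly_generated sM Vg YM W"
  shows "C2_quotient_generated_by sM YM W"
proof -
  interpret M: vector_space sM by (rule Mvs)
  define G where "G = {YM a (-1) w | a w. w \<in> W}"
  define C where "C = C2_space sM YM"
  define S where "S = {x. \<exists>u\<in>M.span G. x - u \<in> C}"
  have Csub: "M.subspace C" unfolding C_def by (rule C2_sub)
  have Ssub: "M.subspace S"
    unfolding M.subspace_def S_def
  proof (intro conjI allI ballI impI)
    show "0 \<in> {x. \<exists>u\<in>M.span G. x - u \<in> C}"
      using M.span_zero M.subspace_0[OF Csub] by force
  next
    fix x y assume "x \<in> {x. \<exists>u\<in>M.span G. x - u \<in> C}" "y \<in> {x. \<exists>u\<in>M.span G. x - u \<in> C}"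
    then obtain u1 u2 where "u1 \<in> M.span G" "x - u1 \<in> C" "u2 \<in> M.span G" "y - u2 \<in> C" by auto
    moreover have "x + y - (u1 + u2) = (x - u1) + (y - u2)" by (simp add: algebra_simps)
    ultimately show "x + y \<in> {x. \<exists>u\<in>M.span G. x - u \<in> C}"
      using M.span_add M.subspace_add[OF Csub] by (metis (mono_tags, lifting) mem_Collect_eq)
  next
    fix c x assume "x \<in> {x. \<exists>u\<in>M.span G. x - u \<in> C}"
    then obtain u where "u \<in> M.span G" "x - u \<in> C" by auto
    moreover have "sM c x - sM c u = sM c (x - u)" by (simp add: M.scale_right_diff_distrib)
    ultimately show "sM c x \<in> {x. \<exists>u\<in>M.span G. x - u \<in> C}"
      using M.span_scale M.subspace_scale[OF Csub] by (metis (mono_tags, lifting) mem_Collect_eq)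
  qed
  have CS: "x \<in> C \<Longrightarrow> x \<in> S" for x unfolding S_def using M.span_zero by force
  have GS: "x \<in> M.span G \<Longrightarrow> x \<in> S" for x unfolding S_def using M.subspace_0[OF Csub] by force
  have CC: "YM a (-1) x \<in> C" if "x \<in> C" for a x
    apply (rule M.span_map[where f="YM a (-1)" and B="{YM a (-2) v | a v. True}"])
    using YM_add YM_scale Csub that comm_C2 unfolding C_def C2_space_def by auto
  have GG: "YM a (-1) x \<in> S" if "x \<in> M.span G" for a x
  proof (rule M.span_map[where f="YM a (-1)" and B=G, OF YM_add YM_scale Ssub _ that])
    fix g assume "g \<in> G"
    then obtain b w where g: "g = YM b (-1) w" "w \<in> W" unfolding G_def by auto
    have "YM (Y a (-1) b) (-1) w \<in> M.span G" unfolding G_def using g(2) by (intro M.span_base) auto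
    moreover have "YM a (-1) (YM b (-1) w) - YM (Y a (-1) b) (-1) w \<in> C"
      unfolding C_def by (rule assoc_C2)
    ultimately show "YM a (-1) g \<in> S" unfolding S_def g(1) by blast
  qed
  have SS: "YM a (-1) x \<in> S" if xS: "x \<in> S" for a x
  proof -
    obtain u where u: "u \<in> M.span G" "x - u \<in> C" using xS unfolding S_def mem_Collect_eq by blast
    have "YM a (-1) x = YM a (-1) u + YM a (-1) (x - u)"
      using YM_add[of a "-1" u "x - u"] by simp
    also have "\<dots> \<in> S"
      by (rule M.subspace_add[OF Ssub GG[OF u(1)] CS[OF CC[OF u(2)]]])
    finally show ?thesis .
  qed
  have mono: "x \<in> S" if "x \<in> strong_monomials Vg YM W" for x
    using that
  proof induction
    case (base w)
    have "w = YM vac (-1) w" using YM_vac by simp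
    hence "w \<in> G" unfolding G_def using base by blast
    thus ?case using GS M.span_base by blast
  next
    case (step a d n v)
    show ?case
    proof (cases "n = 1")
      case True
      thus ?thesis using SS[OF step.IH] by simp
    next
      case False
      hence "- n \<le> -2" using step.hyps(3) by simp
      thus ?thesis using CS C2_low unfolding C_def by blast
    qed
  qed
  have "M.span (strong_monomials Vg YM W) \<subseteq> S"
    using mono by (intro M.span_minimal Ssub) auto
  hence "S = UNIV" using SG unfolding strongly_generated_def by auto
  thus ?thesis unfolding C2_quotient_generated_by_def S_def G_def C_def by auto
qed

end

theorem lemma4p5:
  fixes sV :: "complex \<Rightarrow> 'v::ab_group_add \<Rightarrow> 'v"
    and Vg :: "int \<Rightarrow> 'v set"
    and Y :: "'v \<Rightarrow> int \<Rightarrow> 'v \<Rightarrow> 'v"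
    and vac om :: 'v and cc :: complex
    and sM :: "complex \<Rightarrow> 'm::ab_group_add \<Rightarrow> 'm"
    and Mg :: "nat \<Rightarrow> 'm set"
    and YM :: "'v \<Rightarrow> int \<Rightarrow> 'm \<Rightarrow> 'm"
    and W :: "'m set"
  assumes "is_CFT_type_VOA sV Vg Y vac om cc"
    and "is_admissible_module sV Vg Y vac sM Mg YM"
    and "homogeneous_subspace sM Mg W"
    and "strongly_generated sM Vg YM W"
  shows "C2_quotient_generated_by sM YM W"
proof -
  have V: "is_VOA sV Vg Y vac om cc" using assms(1) unfolding is_CFT_type_VOA_def by simp
  show ?thesis by (rule main_gen[OF V assms(2) assms(4)])
qed

end
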